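(* Let $G=(V,E)$ be a tree on $n$ vertices, let $P$ be any valid search tree on $G$, and let $X=x_1,\dots,x_m$ be any sequence of vertices of $G$. Then $$\mathrm{OPT}(G,X)\;\ge\; \frac{I(G,P,X)}{2}-n .$$
   Context: Search tree on a tree: a rooted tree $T$ is a valid search tree on an unrooted tree $G$ if the root $r$ of $T$ is a vertex of $G$ and the subtrees of $T\setminus r$ are valid search trees on the connected components of $G\setminus r$ (there are no degree restrictions and no order among children). Rotation on a non-root node $v$ of $T$ with parent $p$: swap $p$ and $v$ (so $v$ takes $p$'s place and $p$ becomes a child of $v$); all children of $p$ remain children of $p$; for a child $u$ of $v$ with subtree node set $S_u$, if some node of $S_u$ is adjacent to $p$ in $G$ (this happens for at most one child) then $u$ becomes a child of $p$; all other children of $v$ remain children of $v$. GST model: a valid search tree $T$ on $G$ is maintained with a single pointer; at unit cost one may move the pointer to a child or the parent of the current node, or rotate the current node. A search for $v\in V$ is any sequence of unit-cost operations in which the pointer starts at the root of the current tree and points to $v$ at some point. $\mathrm{OPT}(G,X)$ is the minimum total number of unit-cost operations of any GST-model algorithm (even one knowing $X$ in advance) executing the searches $x_1,\dots,x_m$ in order, starting from any initial valid search tree on $G$. Preferred child: for a fixed search tree $P$ on $G$ and a non-leaf node $y$ of $P$ with children $y_1,\dots,y_d$ (with $y_1$ a fixed designated child), at time $t\in\{1,\dots,m\}$ the preferred child of $y$ is the child $y_i$ whose subtree $P(y_i)$ contains the most recent searched vertex among $x_1,\dots,x_t$ lying in the subtree $P(y)$; it is undefined if no such search exists, and if that most recent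 search is to $y$ itself, the preferred child is $y_1$. Interleave bound: the interleave bound of a node $y$ of $P$ is the number of times its preferred child changes over times $1,2,\dots,m$; $I(G,P,X)$ is the sum of the interleave bounds of all nodes of $P$ (here $P$ is fixed and does not change). *)

theory Defs
  imports Complex_Main
begin

definition ind_edge :: "('a \<Rightarrow> 'a \<Rightarrow> bool) \<Rightarrow> 'a set \<Rightarrow> 'a \<Rightarrow> 'a \<Rightarrow> bool" where
  "ind_edge E A u v \<longleftrightarrow> u \<in> A \<and> v \<in> A \<and> E u v"

definition comp :: "('a \<Rightarrow> 'a \<Rightarrow> bool) \<Rightarrow> 'a set \<Rightarrow> 'a \<Rightarrow> 'a set" where
  "comp E A x = {y. (ind_edge E A)\<^sup>*\<^sup>* x y}"

definition comps :: "('a \<Rightarrow> 'a \<Rightarrow> bool) \<Rightarrow> 'a set \<Rightarrow> 'a set set" where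
  "comps E A = comp E A ` A"

definition is_tree :: "'a set \<Rightarrow> ('a \<Rightarrow> 'a \<Rightarrow> bool) \<Rightarrow> bool" where
  "is_tree V E \<longleftrightarrow> finite V \<and> V \<noteq> {}
     \<and> (\<forall>u v. E u v \<longrightarrow> u \<in> V \<and> v \<in> V)
     \<and> (\<forall>u v. E u v \<longrightarrow> E v u) \<and> (\<forall>u. \<not> E u u)
     \<and> comps E V = {V}
     \<and> card {{u, v} | u v. E u v} = card V - 1"

(* P x = Some p : p is the parent of x;  P x = None : x is the root (or x not a node) *)

definition desc :: "('a \<Rightarrow> 'a option) \<Rightarrow> 'a \<Rightarrow> 'a set" where
  "desc P y = {x. (\<lambda>a b. P a = Some b)\<^sup>*\<^sup>* x y}"

definition rooted_tree :: "'a set \<Rightarrow> ('a \<Rightarrow> 'a option) \<Rightarrow> bool" where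
  "rooted_tree V P \<longleftrightarrow> (\<forall>x. x \<notin> V \<longrightarrow> P x = None)
     \<and> (\<forall>x p. P x = Some p \<longrightarrow> p \<in> V)
     \<and> (\<exists>r\<in>V. P r = None \<and> (\<forall>x\<in>V. (\<lambda>a b. P a = Some b)\<^sup>*\<^sup>* x r))"

definition root :: "'a set \<Rightarrow> ('a \<Rightarrow> 'a option) \<Rightarrow> 'a" where
  "root V P = (THE r. r \<in> V \<and> P r = None)"

inductive vst :: "('a \<Rightarrow> 'a \<Rightarrow> bool) \<Rightarrow> ('a \<Rightarrow> 'a option) \<Rightarrow> 'a set \<Rightarrow> 'a \<Rightarrow> bool"
  for E P where
  "r \<in> S \<Longrightarrow> {desc P c | c. P c = Some r} = comps E (S - {r})
   \<Longrightarrow> (\<forall>c. P c = Some r \<longrightarrow> vst E P (desc P c) c) \<Longrightarrow> vst E P S r"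

definition valid_st :: "'a set \<Rightarrow> ('a \<Rightarrow> 'a \<Rightarrow> bool) \<Rightarrow> ('a \<Rightarrow> 'a option) \<Rightarrow> bool" where
  "valid_st V E P \<longleftrightarrow> rooted_tree V P \<and> vst E P V (root V P)"

definition rotate :: "('a \<Rightarrow> 'a \<Rightarrow> bool) \<Rightarrow> ('a \<Rightarrow> 'a option) \<Rightarrow> 'a \<Rightarrow> ('a \<Rightarrow> 'a option)" where
  "rotate E P v = (case P v of None \<Rightarrow> P | Some p \<Rightarrow>
     (\<lambda>x. if x = v then P p
          else if x = p then Some v
          else if P x = Some v \<and> (\<exists>w\<in>desc P x. E w p) then Some p
          else P x))"

(* configuration: (current search tree, pointer) ; one unit-cost operation *)
definition gst_step :: "('a \<Rightarrow> 'a \<Rightarrow> bool) \<Rightarrow> ('a \<Rightarrow> 'a option) \<times> 'a \<Rightarrow> ('a \<Rightarrow> 'a option) \<times> 'a \<Rightarrow> bool" where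
  "gst_step E c c' \<longleftrightarrow>
     (fst c' = fst c \<and> (fst c (snd c) = Some (snd c') \<or> fst c (snd c') = Some (snd c)))
   \<or> (fst c (snd c) \<noteq> None \<and> fst c' = rotate E (fst c) (snd c) \<and> snd c' = snd c)"

definition search_run :: "'a set \<Rightarrow> ('a \<Rightarrow> 'a \<Rightarrow> bool) \<Rightarrow> ('a \<Rightarrow> 'a option) \<Rightarrow> 'a
     \<Rightarrow> (('a \<Rightarrow> 'a option) \<times> 'a) list \<Rightarrow> bool" where
  "search_run V E T x cs \<longleftrightarrow> cs \<noteq> [] \<and> hd cs = (T, root V T)
     \<and> (\<forall>i. Suc i < length cs \<longrightarrow> gst_step E (cs ! i) (cs ! Suc i))
     \<and> x \<in> snd ` set cs"

fun gst_exec :: "'a set \<Rightarrow> ('a \<Rightarrow> 'a \<Rightarrow> bool) \<Rightarrow> ('a \<Rightarrow> 'a option) \<Rightarrow> 'a list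
     \<Rightarrow> (('a \<Rightarrow> 'a option) \<times> 'a) list list \<Rightarrow> bool" where
  "gst_exec V E T [] [] = True"
| "gst_exec V E T (x # xs) (cs # css) =
     (search_run V E T x cs \<and> gst_exec V E (fst (last cs)) xs css)"
| "gst_exec V E T _ _ = False"

definition exec_cost :: "(('a \<Rightarrow> 'a option) \<times> 'a) list list \<Rightarrow> nat" where
  "exec_cost css = sum_list (map (\<lambda>cs. length cs - 1) css)"

definition OPT :: "'a set \<Rightarrow> ('a \<Rightarrow> 'a \<Rightarrow> bool) \<Rightarrow> 'a list \<Rightarrow> nat" where
  "OPT V E X = Inf {exec_cost css | T0 css. valid_st V E T0 \<and> gst_exec V E T0 X css}"

(* pref_child P d X y t: preferred child of y at time t (after searches x_1..x_t,
   i.e. X!0..X!(t-1)); d y is the designated child of y; None = undefined *)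
definition pref_child :: "('a \<Rightarrow> 'a option) \<Rightarrow> ('a \<Rightarrow> 'a) \<Rightarrow> 'a list \<Rightarrow> 'a \<Rightarrow> nat \<Rightarrow> 'a option" where
  "pref_child P d X y t =
     (let S = {j. j < t \<and> X ! j \<in> desc P y} in
      if S = {} \<or> (\<nexists>c. P c = Some y) then None
      else let x = X ! Max S in
        if x = y then Some (d y)
        else Some (THE c. P c = Some y \<and> x \<in> desc P c))"

definition interleave_node :: "('a \<Rightarrow> 'a option) \<Rightarrow> ('a \<Rightarrow> 'a) \<Rightarrow> 'a list \<Rightarrow> 'a \<Rightarrow> nat" where
  "interleave_node P d X y = card {t. 2 \<le> t \<and> t \<le> length X
      \<and> pref_child P d X y (t - 1) \<noteq> None
      \<and> pref_child P d X y t \<noteq> pref_child P d X y (t - 1)}"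

definition interleave :: "'a set \<Rightarrow> ('a \<Rightarrow> 'a option) \<Rightarrow> ('a \<Rightarrow> 'a) \<Rightarrow> 'a list \<Rightarrow> nat" where
  "interleave V P d X = (\<Sum>y\<in>V. interleave_node P d X y)"

end

theory Submission
  imports Defs
begin



abbreviation pstep :: "('a \<Rightarrow> 'a option) \<Rightarrow> 'a \<Rightarrow> 'a \<Rightarrow> bool" where
  "pstep T \<equiv> (\<lambda>a b. T a = Some b)"

lemma desc_iff: "x \<in> desc T y \<longleftrightarrow> (pstep T)\<^sup>*\<^sup>* x y" by (simp add: desc_def)

lemma chain_lemma:
  assumes "(pstep T)\<^sup>*\<^sup>* a b" "(pstep T)\<^sup>*\<^sup>* a c"
  shows "(pstep T)\<^sup>*\<^sup>* b c \<or> (pstep T)\<^sup>*\<^sup>* c b"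
  using assms
proof (induction arbitrary: c rule: converse_rtranclp_induct)
  case base then show ?case by simp
next
  case (step a a1)
  from step.prems show ?case
  proof (cases rule: converse_rtranclpE)
    case base
    then show ?thesis using step.hyps by (simp add: converse_rtranclp_into_rtranclp)
  next
    case (step a')
    then have "a' = a1" using \<open>T a = Some a1\<close> by simp
    then show ?thesis using step.IH step(2) by blast
  qed
qed

lemma rooted_acyclic:
  assumes "rooted_tree V T" shows "\<not> (pstep T)\<^sup>+\<^sup>+ x x"
proof
  assume cyc: "(pstep T)\<^sup>+\<^sup>+ x x"
  obtain r where r: "r \<in> V" "T r = None" "\<forall>x\<in>V. (pstep T)\<^sup>*\<^sup>* x r"
    using assms unfolding rooted_tree_def by blast
  from cyc obtain x1 where "T x = Some x1" by (blast dest: tranclpD)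
  then have "x \<in> V" using assms unfolding rooted_tree_def by force
  then have "(pstep T)\<^sup>*\<^sup>* x r" using r by blast
  have "\<not> (pstep T)\<^sup>+\<^sup>+ x x" if "(pstep T)\<^sup>*\<^sup>* x r" for x
    using that
  proof (induction rule: converse_rtranclp_induct)
    case base
    show ?case
    proof
      assume "(pstep T)\<^sup>+\<^sup>+ r r"
      then obtain w where "T r = Some w" by (blast dest: tranclpD)
      with r(2) show False by simp
    qed
  next
    case (step y z)
    show ?case
    proof
      assume "(pstep T)\<^sup>+\<^sup>+ y y"
      then obtain w where "T y = Some w" "(pstep T)\<^sup>*\<^sup>* w y" by (blast dest: tranclpD)
      with step have "w = z" by simp
      then have "(pstep T)\<^sup>+\<^sup>+ z z" using \<open>(pstep T)\<^sup>*\<^sup>* w y\<close> step(1)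
        by (simp add: rtranclp_into_tranclp1)
      with step.IH show False by simp
    qed
  qed
  with \<open>(pstep T)\<^sup>*\<^sup>* x r\<close> cyc show False by blast
qed

lemma rooted_antisym:
  assumes "rooted_tree V T" "(pstep T)\<^sup>*\<^sup>* a b" "(pstep T)\<^sup>*\<^sup>* b a" shows "a = b"
proof (rule ccontr)
  assume "a \<noteq> b"
  then have "(pstep T)\<^sup>+\<^sup>+ a b" using assms(2) by (blast dest: rtranclpD)
  then have "(pstep T)\<^sup>+\<^sup>+ a a" using assms(3) by (rule tranclp_rtranclp_tranclp)
  then show False using rooted_acyclic[OF assms(1)] by blast
qed

lemma rooted_root:
  assumes "rooted_tree V T"
  shows "root V T \<in> V" "T (root V T) = None" "\<forall>x\<in>V. (pstep T)\<^sup>*\<^sup>* x (root V T)"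
    "\<And>r'. r' \<in> V \<Longrightarrow> T r' = None \<Longrightarrow> r' = root V T"
proof -
  obtain r where r: "r \<in> V" "T r = None" "\<forall>x\<in>V. (pstep T)\<^sup>*\<^sup>* x r"
    using assms unfolding rooted_tree_def by blast
  have uniq: "r' = r" if "r' \<in> V" "T r' = None" for r'
  proof -
    have "(pstep T)\<^sup>*\<^sup>* r' r" using r that by blast
    then show ?thesis using that(2) by (cases rule: converse_rtranclpE) auto
  qed
  have rt: "root V T = r" unfolding root_def
  proof (rule the_equality)
    show "r \<in> V \<and> T r = None" using r by simp
    show "\<And>r'. r' \<in> V \<and> T r' = None \<Longrightarrow> r' = r" using uniq by blast
  qed
  show "root V T \<in> V" using rt r by simp
  show "T (root V T) = None" using rt r by simp
  show "\<forall>x\<in>V. (pstep T)\<^sup>*\<^sup>* x (root V T)" using rt r by simp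
  show "\<And>r'. r' \<in> V \<Longrightarrow> T r' = None \<Longrightarrow> r' = root V T" using rt uniq by simp
qed

lemma rooted_in_V: assumes "rooted_tree V T" "T x = Some q" shows "x \<in> V \<and> q \<in> V"
proof -
  have 1: "\<forall>x. x \<notin> V \<longrightarrow> T x = None" and 2: "\<forall>x p. T x = Some p \<longrightarrow> p \<in> V"
    using assms(1) unfolding rooted_tree_def by blast+
  have "x \<in> V" using 1 assms(2) by (metis option.distinct(1))
  moreover have "q \<in> V" using 2 assms(2) by blast
  ultimately show ?thesis by blast
qed

lemma desc_subset_V:
  assumes "rooted_tree V T" "y \<in> V" shows "desc T y \<subseteq> V"
proof
  fix x assume "x \<in> desc T y"
  then have "(pstep T)\<^sup>*\<^sup>* x y" by (simp add: desc_iff)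
  then show "x \<in> V"
  proof (cases rule: converse_rtranclpE)
    case base then show ?thesis using assms by simp
  next
    case (step x1) then show ?thesis using rooted_in_V[OF assms(1)] by blast
  qed
qed

lemma desc_root:
  assumes "rooted_tree V T" shows "desc T (root V T) = V"
proof
  show "desc T (root V T) \<subseteq> V" using desc_subset_V[OF assms rooted_root(1)[OF assms]] .
  show "V \<subseteq> desc T (root V T)" using rooted_root(3)[OF assms] by (auto simp: desc_iff)
qed

lemma desc_trans: "x \<in> desc T y \<Longrightarrow> y \<in> desc T z \<Longrightarrow> x \<in> desc T z"
  unfolding desc_iff by (rule rtranclp_trans)

lemma none_in_desc: "T r = None \<Longrightarrow> r \<in> desc T z \<Longrightarrow> r = z"
  unfolding desc_iff by (erule converse_rtranclpE) auto




lemma path_transfer: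
  assumes "(pstep T)\<^sup>*\<^sup>* a b"
    "\<forall>x. (pstep T)\<^sup>*\<^sup>* a x \<longrightarrow> (pstep T)\<^sup>+\<^sup>+ x b \<longrightarrow> T' x = T x"
  shows "(pstep T')\<^sup>*\<^sup>* a b"
  using assms
proof (induction rule: converse_rtranclp_induct)
  case base then show ?case by simp
next
  case (step a a1)
  have "\<forall>x. (pstep T)\<^sup>*\<^sup>* a1 x \<longrightarrow> (pstep T)\<^sup>+\<^sup>+ x b \<longrightarrow> T' x = T x"
    using step.prems step.hyps(1) by (meson converse_rtranclp_into_rtranclp)
  then have "(pstep T')\<^sup>*\<^sup>* a1 b" using step.IH by blast
  moreover have "(pstep T)\<^sup>+\<^sup>+ a b" using step.hyps by (rule rtranclp_into_tranclp2)
  then have "T' a = T a" using step.prems by blast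
  then have "T' a = Some a1" using step.hyps by simp
  ultimately show ?case by (rule converse_rtranclp_into_rtranclp[rotated])
qed

locale rot =
  fixes V :: "'a set" and E :: "'a \<Rightarrow> 'a \<Rightarrow> bool" and T :: "'a \<Rightarrow> 'a option" and v p
  assumes rt: "rooted_tree V T" and tv: "T v = Some p"
begin

definition "T' = rotate E T v"
definition "mv x \<longleftrightarrow> T x = Some v \<and> (\<exists>w\<in>desc T x. E w p)"

lemma acyc: "\<not> (pstep T)\<^sup>+\<^sup>+ x x" using rooted_acyclic[OF rt] .

lemma T'_eq: "T' x = (if x = v then T p else if x = p then Some v else if mv x then Some p else T x)"
  unfolding T'_def rotate_def mv_def using tv by simp

lemma vp: "v \<noteq> p"
proof
  assume "v = p"
  then have "(pstep T)\<^sup>+\<^sup>+ v v" using tv by (simp add: tranclp.r_into_trancl)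
  then show False using acyc by blast
qed

lemma Tp_not_v: "T p \<noteq> Some v"
proof
  assume "T p = Some v"
  then have "(pstep T)\<^sup>+\<^sup>+ v v" using tv
    by (meson tranclp.r_into_trancl tranclp.trancl_into_trancl)
  then show False using acyc by blast
qed

lemma mv_ne: "mv x \<Longrightarrow> x \<noteq> v \<and> x \<noteq> p"
  unfolding mv_def using tv vp Tp_not_v by auto

lemma T'_cases: "T' x = T x \<or> x = v \<or> x = p \<or> mv x"
  unfolding T'_eq by auto

lemma T'v: "T' v = T p" unfolding T'_eq by simp
lemma T'p: "T' p = Some v" unfolding T'_eq using vp by simp
lemma T'mv: "mv x \<Longrightarrow> T' x = Some p" unfolding T'_eq using mv_ne by simp

lemma v_in_desc_p: "v \<in> desc T p" using tv by (simp add: desc_iff r_into_rtranclp)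

lemma unchanged_out: "x \<notin> desc T p \<Longrightarrow> T' x = T x"
proof -
  assume x: "x \<notin> desc T p"
  have "x \<noteq> v" using x v_in_desc_p by blast
  moreover have "x \<noteq> p" using x by (auto simp: desc_iff)
  moreover have "\<not> mv x"
  proof
    assume "mv x"
    then have "T x = Some v" by (simp add: mv_def)
    then have "x \<in> desc T p" using tv
      by (simp add: desc_iff) (meson converse_rtranclp_into_rtranclp r_into_rtranclp)
    with x show False by blast
  qed
  ultimately show ?thesis unfolding T'_eq by simp
qed

lemma L2: "(pstep T)\<^sup>*\<^sup>* a p \<Longrightarrow> (pstep T')\<^sup>*\<^sup>* a v"
proof (induction rule: converse_rtranclp_induct)
  case base then show ?case using T'p by (simp add: r_into_rtranclp)
next
  case (step a a1)
  consider "T' a = T a" | "a = v" | "a = p" | "mv a" using T'_cases by blast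
  then show ?case
  proof cases
    case 1 then show ?thesis using step by (simp add: converse_rtranclp_into_rtranclp)
  next
    case 2 then show ?thesis by simp
  next
    case 3 then show ?thesis using T'p by (simp add: r_into_rtranclp)
  next
    case 4 then have "T' a = Some p" by (rule T'mv)
    then show ?thesis using T'p by (meson converse_rtranclp_into_rtranclp r_into_rtranclp)
  qed
qed

lemma v_in_V: "v \<in> V" and p_in_V: "p \<in> V" using rooted_in_V[OF rt tv] by auto

lemma out_path:
  assumes "(pstep T)\<^sup>*\<^sup>* x b" "x \<notin> desc T p"
  shows "(pstep T')\<^sup>*\<^sup>* x b"
proof (rule path_transfer[OF assms(1)], intro allI impI)
  fix y assume "(pstep T)\<^sup>*\<^sup>* x y"
  then have "y \<notin> desc T p" using assms(2) desc_trans by (fastforce simp: desc_iff)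
  then show "T' y = T y" by (rule unchanged_out)
qed

lemma rooted': "rooted_tree V T'"
proof -
  have a: "\<forall>x. x \<notin> V \<longrightarrow> T' x = None"
  proof (intro allI impI)
    fix x assume "x \<notin> V"
    then have "T x = None" using rt unfolding rooted_tree_def by blast
    moreover have "x \<noteq> v" "x \<noteq> p" using \<open>x \<notin> V\<close> v_in_V p_in_V by auto
    ultimately show "T' x = None" unfolding T'_eq mv_def by simp
  qed
  have b: "\<forall>x q. T' x = Some q \<longrightarrow> q \<in> V"
  proof (intro allI impI)
    fix x q assume "T' x = Some q"
    then show "q \<in> V" unfolding T'_eq using v_in_V p_in_V rooted_in_V[OF rt]
      by (auto split: if_splits)
  qed
  obtain r where r: "r \<in> V" "T r = None" "\<forall>x\<in>V. (pstep T)\<^sup>*\<^sup>* x r"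
    using rt unfolding rooted_tree_def by blast
  have c: "\<exists>r'\<in>V. T' r' = None \<and> (\<forall>x\<in>V. (pstep T')\<^sup>*\<^sup>* x r')"
  proof (cases "T p")
    case None
    then have "p = r" using rooted_root(4)[OF rt] r p_in_V by metis
    have "\<forall>x\<in>V. (pstep T')\<^sup>*\<^sup>* x v" using r \<open>p = r\<close> L2 by blast
    then show ?thesis using T'v None v_in_V by auto
  next
    case (Some q)
    have "r \<noteq> v" "r \<noteq> p" using r tv Some by auto
    moreover have "\<not> mv r" using r(2) by (simp add: mv_def)
    ultimately have Tr: "T' r = None" unfolding T'_eq using r(2) by simp
    have qV: "q \<in> V" using rooted_in_V[OF rt Some] by simp
    have qout: "q \<notin> desc T p"
    proof
      assume "q \<in> desc T p"
      then have "(pstep T)\<^sup>+\<^sup>+ p p" using Some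
        by (simp add: desc_iff rtranclp_into_tranclp2)
      then show False using acyc by blast
    qed
    have qr: "(pstep T')\<^sup>*\<^sup>* q r" using out_path r qV qout by blast
    have "(pstep T')\<^sup>*\<^sup>* x r" if "x \<in> V" for x
    proof (cases "x \<in> desc T p")
      case True
      then have "(pstep T')\<^sup>*\<^sup>* x v" using L2 by (simp add: desc_iff)
      moreover have "T' v = Some q" using T'v Some by simp
      ultimately show ?thesis using qr
        by (meson rtranclp.rtrancl_into_rtrancl rtranclp_trans)
    next
      case False
      then show ?thesis using out_path r that by blast
    qed
    then show ?thesis using Tr r(1) by blast
  qed
  show ?thesis unfolding rooted_tree_def using a b c by blast
qed

lemma below_child:
  assumes "(pstep T)\<^sup>+\<^sup>+ x w" "T w = Some v"
  shows "T' x = T x"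
proof -
  have vw: "(pstep T)\<^sup>+\<^sup>+ v v" if "(pstep T)\<^sup>*\<^sup>* v w"
    using that assms(2) by (rule rtranclp_into_tranclp1)
  have "x \<noteq> v" using assms vw by (metis tranclp_into_rtranclp acyc)
  moreover have "x \<noteq> p"
  proof
    assume "x = p"
    then have "(pstep T)\<^sup>*\<^sup>* v w" using tv assms(1)
      by (meson converse_rtranclp_into_rtranclp tranclp_into_rtranclp)
    then show False using vw acyc by blast
  qed
  moreover have "\<not> mv x"
  proof
    assume "mv x"
    then have "T x = Some v" by (simp add: mv_def)
    from tranclpD[OF assms(1)] obtain z where "T x = Some z" "(pstep T)\<^sup>*\<^sup>* z w" by blast
    then have "(pstep T)\<^sup>*\<^sup>* v w" using \<open>T x = Some v\<close> by simp
    then show False using vw acyc by blast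
  qed
  ultimately show ?thesis unfolding T'_eq by simp
qed

lemma edge_one:
  assumes E: "E a b" and ab: "(pstep T)\<^sup>*\<^sup>* a b"
  shows "(pstep T')\<^sup>*\<^sup>* a b \<or> (pstep T')\<^sup>*\<^sup>* b a"
proof -
  have trans1: "(pstep T)\<^sup>*\<^sup>* a y" if "(pstep T)\<^sup>*\<^sup>* a x" "T x = Some y" for x y
    using that by (simp add: rtranclp.rtrancl_into_rtrancl)
  show ?thesis
  proof (cases "(pstep T)\<^sup>*\<^sup>* a p \<and> (pstep T)\<^sup>+\<^sup>+ p b")
    case True
    then obtain q where q: "T p = Some q" "(pstep T)\<^sup>*\<^sup>* q b" by (blast dest: tranclpD)
    have qout: "q \<notin> desc T p"
    proof
      assume "q \<in> desc T p"
      then have "(pstep T)\<^sup>+\<^sup>+ p p" using q(1)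
        by (simp add: desc_iff rtranclp_into_tranclp2)
      then show False using acyc by blast
    qed
    have "(pstep T')\<^sup>*\<^sup>* q b" using out_path q(2) qout by blast
    moreover have "(pstep T')\<^sup>*\<^sup>* a v" using L2 True by blast
    moreover have "T' v = Some q" using T'v q by simp
    ultimately show ?thesis by (meson rtranclp.rtrancl_into_rtrancl rtranclp_trans)
  next
    case notA: False
    show ?thesis
    proof (cases "(pstep T)\<^sup>*\<^sup>* a v \<and> (pstep T)\<^sup>+\<^sup>+ v b")
      case True
      then obtain z where "T v = Some z" "(pstep T)\<^sup>*\<^sup>* z b" by (blast dest: tranclpD)
      then have pb: "(pstep T)\<^sup>*\<^sup>* p b" using tv by simp
      have "(pstep T)\<^sup>*\<^sup>* a p" using True tv trans1 by blast
      have "b = p"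
      proof (rule ccontr)
        assume "b \<noteq> p"
        then have "(pstep T)\<^sup>+\<^sup>+ p b" using pb by (blast dest: rtranclpD)
        then show False using notA \<open>(pstep T)\<^sup>*\<^sup>* a p\<close> by blast
      qed
      show ?thesis
      proof (cases "a = v")
        case True
        then show ?thesis using \<open>b = p\<close> T'p by (simp add: r_into_rtranclp)
      next
        case False
        then have "(pstep T)\<^sup>+\<^sup>+ a v" using True by (blast dest: rtranclpD)
        then obtain w where w: "(pstep T)\<^sup>*\<^sup>* a w" "T w = Some v"
          by (blast elim: tranclp.cases dest: tranclp_into_rtranclp)
        have "mv w" unfolding mv_def using w E \<open>b = p\<close> by (auto simp: desc_iff)
        then have "T' w = Some p" by (rule T'mv)
        moreover have "(pstep T')\<^sup>*\<^sup>* a w"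
          by (rule path_transfer[OF w(1)]) (use below_child w(2) in blast)
        ultimately show ?thesis using \<open>b = p\<close> by (simp add: rtranclp.rtrancl_into_rtrancl)
      qed
    next
      case notB: False
      show ?thesis
      proof (cases "\<exists>u. mv u \<and> (pstep T)\<^sup>*\<^sup>* a u \<and> (pstep T)\<^sup>+\<^sup>+ u b")
        case True
        then obtain u where u: "mv u" "(pstep T)\<^sup>*\<^sup>* a u" "(pstep T)\<^sup>+\<^sup>+ u b" by blast
        have Tu: "T u = Some v" using u(1) by (simp add: mv_def)
        then have vb: "(pstep T)\<^sup>*\<^sup>* v b" using u(3) by (auto dest: tranclpD)
        have "(pstep T)\<^sup>*\<^sup>* a v" using u(2) Tu trans1 by blast
        have "b = v"
        proof (rule ccontr)
          assume "b \<noteq> v"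
          then have "(pstep T)\<^sup>+\<^sup>+ v b" using vb by (blast dest: rtranclpD)
          then show False using notB \<open>(pstep T)\<^sup>*\<^sup>* a v\<close> by blast
        qed
        have "(pstep T')\<^sup>*\<^sup>* a u"
          by (rule path_transfer[OF u(2)]) (use below_child Tu in blast)
        moreover have "T' u = Some p" using u(1) by (rule T'mv)
        ultimately have "(pstep T')\<^sup>*\<^sup>* a p" by (simp add: rtranclp.rtrancl_into_rtrancl)
        then show ?thesis using T'p \<open>b = v\<close> by (simp add: rtranclp.rtrancl_into_rtrancl)
      next
        case notC: False
        have "(pstep T')\<^sup>*\<^sup>* a b"
        proof (rule path_transfer[OF ab], intro allI impI)
          fix x assume ax: "(pstep T)\<^sup>*\<^sup>* a x" and xb: "(pstep T)\<^sup>+\<^sup>+ x b"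
          consider "T' x = T x" | "x = v" | "x = p" | "mv x" using T'_cases by blast
          then show "T' x = T x"
          proof cases
            case 2 then show ?thesis using notB ax xb by blast
          next
            case 3 then show ?thesis using notA ax xb by blast
          next
            case 4 then show ?thesis using notC ax xb by blast
          qed simp
        qed
        then show ?thesis by simp
      qed
    qed
  qed
qed

lemma edges':
  assumes "\<forall>a b. E a b \<longrightarrow> a \<in> desc T b \<or> b \<in> desc T a"
    and sym: "\<forall>a b. E a b \<longrightarrow> E b a"
  shows "\<forall>a b. E a b \<longrightarrow> a \<in> desc T' b \<or> b \<in> desc T' a"
proof (intro allI impI)
  fix a b assume E: "E a b"
  then have "a \<in> desc T b \<or> b \<in> desc T a" using assms by blast
  then show "a \<in> desc T' b \<or> b \<in> desc T' a"
  proof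
    assume "a \<in> desc T b"
    then show ?thesis using edge_one[OF E] by (auto simp: desc_iff)
  next
    assume "b \<in> desc T a"
    moreover have "E b a" using E sym by blast
    ultimately show ?thesis using edge_one[of b a] by (auto simp: desc_iff)
  qed
qed

lemma desc_keep:
  assumes "v \<notin> desc T z"
  shows "desc T' z = desc T z"
proof
  show "desc T z \<subseteq> desc T' z"
  proof
    fix x assume "x \<in> desc T z"
    then have xz: "(pstep T)\<^sup>*\<^sup>* x z" by (simp add: desc_iff)
    have "(pstep T')\<^sup>*\<^sup>* x z"
    proof (rule path_transfer[OF xz], intro allI impI)
      fix y assume yz: "(pstep T)\<^sup>+\<^sup>+ y z"
      consider "T' y = T y" | "y = v" | "y = p" | "mv y" using T'_cases by blast
      then show "T' y = T y"
      proof cases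
        case 2 then show ?thesis using yz assms by (auto simp: desc_iff dest: tranclp_into_rtranclp)
      next
        case 3
        then have "(pstep T)\<^sup>*\<^sup>* v z" using yz tv
          by (meson converse_rtranclp_into_rtranclp tranclp_into_rtranclp)
        then show ?thesis using assms by (simp add: desc_iff)
      next
        case 4
        then have "T y = Some v" by (simp add: mv_def)
        then have "(pstep T)\<^sup>*\<^sup>* v z" using yz by (auto dest: tranclpD)
        then show ?thesis using assms by (simp add: desc_iff)
      qed simp
    qed
    then show "x \<in> desc T' z" by (simp add: desc_iff)
  qed
next
  show "desc T' z \<subseteq> desc T z"
  proof
    fix x assume "x \<in> desc T' z"
    then have "(pstep T')\<^sup>*\<^sup>* x z" by (simp add: desc_iff)
    then have "(pstep T)\<^sup>*\<^sup>* x z"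
    proof (induction rule: converse_rtranclp_induct)
      case base then show ?case by simp
    next
      case (step x x1)
      consider "T' x = T x" | "x = v" | "x = p" | "mv x" using T'_cases by blast
      then show ?case
      proof cases
        case 1
        then have "T x = Some x1" using step.hyps by simp
        then show ?thesis using step.IH by (rule converse_rtranclp_into_rtranclp)
      next
        case 2
        then have "T p = Some x1" using step.hyps T'v by simp
        then have "(pstep T)\<^sup>*\<^sup>* v z" using tv step.IH
          by (meson converse_rtranclp_into_rtranclp)
        then show ?thesis using assms by (simp add: desc_iff)
      next
        case 3
        then have "x1 = v" using step.hyps T'p by simp
        then show ?thesis using assms step.IH by (simp add: desc_iff)
      next
        case 4
        then have "x1 = p" using step.hyps T'mv by simp
        then have "(pstep T)\<^sup>*\<^sup>* v z" using tv step.IH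
          by (meson converse_rtranclp_into_rtranclp)
        then show ?thesis using assms by (simp add: desc_iff)
      qed
    qed
    then show "x \<in> desc T z" by (simp add: desc_iff)
  qed
qed

end




definition tinv :: "'a set \<Rightarrow> ('a \<Rightarrow> 'a \<Rightarrow> bool) \<Rightarrow> ('a \<Rightarrow> 'a option) \<Rightarrow> bool" where
  "tinv V E T \<longleftrightarrow> rooted_tree V T \<and> (\<forall>a b. E a b \<longrightarrow> a \<in> desc T b \<or> b \<in> desc T a)"

lemma step_cases:
  assumes "gst_step E c c'"
  obtains (up) "fst c' = fst c" "fst c (snd c) = Some (snd c')"
    | (down) "fst c' = fst c" "fst c (snd c') = Some (snd c)"
    | (rot) p where "fst c (snd c) = Some p" "fst c' = rotate E (fst c) (snd c)" "snd c' = snd c"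
  using assms unfolding gst_step_def by auto

lemma step_tinv:
  assumes sym: "\<forall>a b. E a b \<longrightarrow> E b a" and inv: "tinv V E (fst c)" and st: "gst_step E c c'"
  shows "tinv V E (fst c')"
  using st
proof (cases rule: step_cases)
  case (rot p)
  interpret r: rot V E "fst c" "snd c" p
    using inv rot(1) by unfold_locales (auto simp: tinv_def)
  have "fst c' = r.T'" using rot(2) by (simp add: r.T'_def)
  then show ?thesis using r.rooted' r.edges' inv sym by (simp add: tinv_def)
qed (use inv in simp_all)

lemma chain_inv:
  assumes "cs \<noteq> []" "Q (cs ! 0)"
    "\<And>i. Suc i < length cs \<Longrightarrow> Q (cs ! i) \<Longrightarrow> Q (cs ! Suc i)"
  shows "\<forall>i<length cs. Q (cs ! i)"
proof (intro allI impI)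
  fix i assume "i < length cs"
  then show "Q (cs ! i)"
    by (induction i) (use assms in auto)
qed

lemma run_tinv:
  assumes sym: "\<forall>a b. E a b \<longrightarrow> E b a" and inv: "tinv V E T"
    and run: "search_run V E T x cs"
  shows "tinv V E (fst (last cs))"
proof -
  have ne: "cs \<noteq> []" and hd: "hd cs = (T, root V T)"
    and st: "\<forall>i. Suc i < length cs \<longrightarrow> gst_step E (cs ! i) (cs ! Suc i)"
    using run unfolding search_run_def by auto
  have "\<forall>i<length cs. tinv V E (fst (cs ! i))"
  proof (rule chain_inv[OF ne])
    show "tinv V E (fst (cs ! 0))" using hd ne inv by (simp add: hd_conv_nth[symmetric])
  next
    fix i assume "Suc i < length cs" "tinv V E (fst (cs ! i))"
    then show "tinv V E (fst (cs ! Suc i))" using step_tinv[OF sym] st by blast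
  qed
  then show ?thesis using ne by (simp add: last_conv_nth)
qed

lemma step_Q:
  assumes sym: "\<forall>a b. E a b \<longrightarrow> E b a"
    and Q: "tinv V E (fst c)" "desc (fst c) z = D" "snd c \<notin> D"
    and st: "gst_step E c c'" and nz: "snd c' \<noteq> z"
  shows "tinv V E (fst c') \<and> desc (fst c') z = D \<and> snd c' \<notin> D"
  using st
proof (cases rule: step_cases)
  case up
  have "snd c' \<notin> D"
  proof
    assume "snd c' \<in> D"
    then have "snd c \<in> desc (fst c) z" using up(2) Q(2)
      by (auto simp: desc_iff intro: converse_rtranclp_into_rtranclp)
    then show False using Q by simp
  qed
  then show ?thesis using Q up by simp
next
  case down
  have "snd c' \<notin> D"
  proof
    assume "snd c' \<in> D"
    then have "snd c' \<in> desc (fst c) z" using Q(2) by simp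
    then have "(pstep (fst c))\<^sup>*\<^sup>* (snd c') z" by (simp add: desc_iff)
    then have "(pstep (fst c))\<^sup>+\<^sup>+ (snd c') z" using nz by (blast dest: rtranclpD)
    then obtain z1 where "fst c (snd c') = Some z1" "(pstep (fst c))\<^sup>*\<^sup>* z1 z"
      by (blast dest: tranclpD)
    then have "snd c \<in> desc (fst c) z" using down(2) by (simp add: desc_iff)
    then show False using Q by simp
  qed
  then show ?thesis using Q down by simp
next
  case (rot p)
  interpret r: rot V E "fst c" "snd c" p
    using Q(1) rot(1) by unfold_locales (auto simp: tinv_def)
  have T': "fst c' = r.T'" using rot(2) by (simp add: r.T'_def)
  have "desc r.T' z = desc (fst c) z" using Q(2,3) by (intro r.desc_keep) simp
  then show ?thesis using T' rot(3) Q r.rooted' r.edges' sym by (simp add: tinv_def)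
qed

lemma untouched:
  assumes sym: "\<forall>a b. E a b \<longrightarrow> E b a" and inv: "tinv V E T"
    and run: "search_run V E T x cs" and nt: "z \<notin> snd ` set cs"
  shows "desc (fst (last cs)) z = desc T z" "x \<notin> desc T z"
proof -
  have ne: "cs \<noteq> []" and hd: "hd cs = (T, root V T)"
    and st: "\<forall>i. Suc i < length cs \<longrightarrow> gst_step E (cs ! i) (cs ! Suc i)"
    and xin: "x \<in> snd ` set cs"
    using run unfolding search_run_def by auto
  have rt: "rooted_tree V T" using inv by (simp add: tinv_def)
  have "root V T \<noteq> z" using hd ne nt by (metis hd_in_set image_eqI snd_conv)
  then have rz: "root V T \<notin> desc T z" using none_in_desc rooted_root(2)[OF rt] by metis
  define Q where "Q c \<longleftrightarrow> tinv V E (fst c) \<and> desc (fst c) z = desc T z \<and> snd c \<notin> desc T z" for c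
  have all: "\<forall>i<length cs. Q (cs ! i)"
  proof (rule chain_inv[OF ne])
    show "Q (cs ! 0)" using hd ne inv rz by (simp add: Q_def hd_conv_nth[symmetric])
  next
    fix i assume i: "Suc i < length cs" "Q (cs ! i)"
    have "snd (cs ! Suc i) \<noteq> z" using nt i(1) by (metis nth_mem image_eqI)
    then show "Q (cs ! Suc i)" using step_Q[OF sym, of V "cs ! i" z "desc T z"] i st
      by (simp add: Q_def)
  qed
  then show "desc (fst (last cs)) z = desc T z" using ne by (simp add: last_conv_nth Q_def)
  from xin obtain c where "c \<in> set cs" "x = snd c" by blast
  then show "x \<notin> desc T z" using all by (metis Q_def in_set_conv_nth)
qed




definition conn :: "('a \<Rightarrow> 'a \<Rightarrow> bool) \<Rightarrow> 'a set \<Rightarrow> bool" where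
  "conn E C \<longleftrightarrow> (\<forall>a\<in>C. \<forall>b\<in>C. (ind_edge E C)\<^sup>*\<^sup>* a b)"

lemma sym_rtranclp: assumes "\<forall>x y. R x y \<longrightarrow> R y x" "R\<^sup>*\<^sup>* a b" shows "R\<^sup>*\<^sup>* b a"
  using assms(2) by (induction rule: rtranclp_induct) (use assms(1) in \<open>auto intro: converse_rtranclp_into_rtranclp\<close>)

lemma comp_restrict:
  "(ind_edge E A)\<^sup>*\<^sup>* w u \<Longrightarrow> (ind_edge E (comp E A w))\<^sup>*\<^sup>* w u"
proof (induction rule: rtranclp_induct)
  case base then show ?case by simp
next
  case (step u u')
  have "u \<in> comp E A w" "u' \<in> comp E A w" using step.hyps
    by (auto simp: comp_def intro: rtranclp.rtrancl_into_rtrancl)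
  then have "ind_edge E (comp E A w) u u'" using step.hyps(2) by (simp add: ind_edge_def)
  then show ?case using rtranclp.rtrancl_into_rtrancl[OF step.IH] by blast
qed

lemma comp_conn:
  assumes sym: "\<forall>a b. E a b \<longrightarrow> E b a" shows "conn E (comp E A w)"
  unfolding conn_def
proof (intro ballI)
  fix a b assume "a \<in> comp E A w" "b \<in> comp E A w"
  then have "(ind_edge E A)\<^sup>*\<^sup>* w a" "(ind_edge E A)\<^sup>*\<^sup>* w b" by (simp_all add: comp_def)
  then have wa: "(ind_edge E (comp E A w))\<^sup>*\<^sup>* w a" and wb: "(ind_edge E (comp E A w))\<^sup>*\<^sup>* w b"
    by (simp_all add: comp_restrict)
  have "\<forall>x y. ind_edge E (comp E A w) x y \<longrightarrow> ind_edge E (comp E A w) y x"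
    using sym by (auto simp: ind_edge_def)
  then have "(ind_edge E (comp E A w))\<^sup>*\<^sup>* a w" using wa by (rule sym_rtranclp)
  then show "(ind_edge E (comp E A w))\<^sup>*\<^sup>* a b" using wb by (rule rtranclp_trans)
qed

lemma top_exists:
  assumes inv: "tinv V E T" and fin: "finite C" and CV: "C \<subseteq> V" and ne: "C \<noteq> {}"
    and cn: "conn E C"
  shows "\<exists>z\<in>C. C \<subseteq> desc T z"
proof -
  have rt: "rooted_tree V T" using inv by (simp add: tinv_def)
  define f where "f z = card (desc T z \<inter> C)" for z
  have "Max (f ` C) \<in> f ` C" using fin ne by simp
  then obtain z where z: "z \<in> C" "f z = Max (f ` C)" by auto
  have mx: "f b \<le> f z" if "b \<in> C" for b using z(2) fin that by simp
  have "b \<in> desc T z" if "(ind_edge E C)\<^sup>*\<^sup>* z b" for b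
    using that
  proof (induction rule: rtranclp_induct)
    case base then show ?case by (simp add: desc_iff)
  next
    case (step a b)
    have ab: "a \<in> C" "b \<in> C" "E a b" using step.hyps(2) by (auto simp: ind_edge_def)
    then have "a \<in> desc T b \<or> b \<in> desc T a" using inv by (simp add: tinv_def)
    then show ?case
    proof
      assume "b \<in> desc T a"
      then show ?thesis using step.IH by (rule desc_trans)
    next
      assume "a \<in> desc T b"
      then have "(pstep T)\<^sup>*\<^sup>* b z \<or> (pstep T)\<^sup>*\<^sup>* z b"
        using step.IH chain_lemma by (simp add: desc_iff)
      then show ?thesis
      proof
        assume "(pstep T)\<^sup>*\<^sup>* b z" then show ?thesis by (simp add: desc_iff)
      next
        assume zb: "(pstep T)\<^sup>*\<^sup>* z b"
        show ?thesis
        proof (rule ccontr)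
          assume nb: "b \<notin> desc T z"
          have "desc T z \<inter> C \<subset> desc T b \<inter> C"
          proof
            show "desc T z \<inter> C \<subseteq> desc T b \<inter> C"
              using zb by (auto simp: desc_iff intro: rtranclp_trans)
            show "desc T z \<inter> C \<noteq> desc T b \<inter> C"
              using nb ab(2) by (auto simp: desc_iff)
          qed
          then have "f z < f b" unfolding f_def using fin by (simp add: psubset_card_mono)
          with mx[OF ab(2)] show False by simp
        qed
      qed
    qed
  qed
  then have "C \<subseteq> desc T z" using cn z(1) unfolding conn_def by blast
  then show ?thesis using z(1) by blast
qed

lemma vst_edges:
  assumes "vst E P S r" "\<forall>a. \<not> E a a"
  shows "\<forall>a\<in>S. \<forall>b\<in>S. E a b \<longrightarrow> a \<in> desc P b \<or> b \<in> desc P a"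
  using assms(1)
proof (induction rule: vst.induct)
  case (1 r S)
  have hc: "\<exists>c. P c = Some r \<and> comp E (S - {r}) u = desc P c" if "u \<in> S - {r}" for u
  proof -
    have "comp E (S - {r}) u \<in> comps E (S - {r})" using that by (simp add: comps_def)
    then have "comp E (S - {r}) u \<in> {desc P c |c. P c = Some r}" using 1(2) by simp
    then show ?thesis by auto
  qed
  have self: "u \<in> comp E A u" for u A by (simp add: comp_def)
  have below: "b \<in> desc P r" if bS: "b \<in> S" "b \<noteq> r" for b
  proof -
    obtain c where c: "P c = Some r" "comp E (S - {r}) b = desc P c" using hc[of b] bS by blast
    then have "b \<in> desc P c" using self by metis
    then show ?thesis using c(1) by (simp add: desc_iff rtranclp.rtrancl_into_rtrancl)
  qed
  show ?case
  proof (intro ballI impI)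
    fix a b assume ab: "a \<in> S" "b \<in> S" "E a b"
    have "a \<noteq> b" using ab(3) assms(2) by metis
    show "a \<in> desc P b \<or> b \<in> desc P a"
    proof (cases "a = r \<or> b = r")
      case True
      then show ?thesis using below ab \<open>a \<noteq> b\<close> by blast
    next
      case False
      obtain c where c: "P c = Some r" "comp E (S - {r}) a = desc P c" using hc ab False by blast
      have "ind_edge E (S - {r}) a b" using ab False by (simp add: ind_edge_def)
      then have "b \<in> comp E (S - {r}) a" by (simp add: comp_def)
      then have "a \<in> desc P c" "b \<in> desc P c" using c self by metis+
      then show ?thesis using 1(3) c(1) ab(3) by blast
    qed
  qed
qed

locale gst =
  fixes V :: "'a set" and E :: "'a \<Rightarrow> 'a \<Rightarrow> bool" and P :: "'a \<Rightarrow> 'a option"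
  assumes tree: "is_tree V E" and vP: "valid_st V E P"
begin

lemma finV: "finite V" using tree by (simp add: is_tree_def)
lemma sym: "\<forall>a b. E a b \<longrightarrow> E b a" using tree by (simp add: is_tree_def)
lemma irr: "\<forall>a. \<not> E a a" using tree by (simp add: is_tree_def)
lemma rtP: "rooted_tree V P" using vP by (simp add: valid_st_def)
lemma vst_root: "vst E P V (root V P)" using vP by (simp add: valid_st_def)

lemma tinvP: "tinv V E P"
proof -
  have "\<forall>a\<in>V. \<forall>b\<in>V. E a b \<longrightarrow> a \<in> desc P b \<or> b \<in> desc P a"
    using vst_edges[OF vst_root irr] .
  moreover have "\<forall>a b. E a b \<longrightarrow> a \<in> V \<and> b \<in> V" using tree by (simp add: is_tree_def)
  ultimately show ?thesis using rtP by (simp add: tinv_def)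
qed

lemma acycP: "\<not> (pstep P)\<^sup>+\<^sup>+ x x" using rooted_acyclic[OF rtP] .

lemma vst_all: "y \<in> V \<Longrightarrow> vst E P (desc P y) y"
proof -
  assume "y \<in> V"
  then have "(pstep P)\<^sup>*\<^sup>* y (root V P)" using rooted_root(3)[OF rtP] by blast
  then show ?thesis
  proof (induction rule: converse_rtranclp_induct)
    case base then show ?case using vst_root desc_root[OF rtP] by simp
  next
    case (step y z)
    then show ?case by (auto elim: vst.cases)
  qed
qed

lemma child_comp:
  assumes "y \<in> V" "P c = Some y" shows "\<exists>A w. desc P c = comp E A w"
proof -
  from vst_all[OF assms(1)] have "{desc P c |c. P c = Some y} = comps E (desc P y - {y})"
    by (auto elim: vst.cases)
  moreover have "desc P c \<in> {desc P c |c. P c = Some y}" using assms(2) by blast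
  ultimately have "desc P c \<in> comp E (desc P y - {y}) ` (desc P y - {y})" by (simp add: comps_def)
  then show ?thesis by blast
qed

lemma conn_child: "y \<in> V \<Longrightarrow> P c = Some y \<Longrightarrow> conn E (desc P c)"
  using child_comp comp_conn[OF sym] by metis

lemma conn_desc:
  assumes "y \<in> V" shows "conn E (desc P y)"
proof (cases "y = root V P")
  case True
  have "comps E V = {V}" using tree by (simp add: is_tree_def)
  then have "comp E V y = V" using assms by (auto simp: comps_def)
  then show ?thesis using True desc_root[OF rtP] comp_conn[OF sym] by metis
next
  case False
  have "(pstep P)\<^sup>*\<^sup>* y (root V P)" using rooted_root(3)[OF rtP] assms by blast
  then obtain q where "P y = Some q" using False by (blast elim: converse_rtranclpE)
  then show ?thesis using conn_child rooted_in_V[OF rtP] by blast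
qed

end




definition gset :: "('a \<Rightarrow> 'a option) \<Rightarrow> 'a \<Rightarrow> 'a \<Rightarrow> 'a set" where
  "gset P y x = (if x = y then {y} else desc P (THE c. P c = Some y \<and> x \<in> desc P c))"

definition Nset :: "('a \<Rightarrow> 'a option) \<Rightarrow> ('a \<Rightarrow> 'a option) \<Rightarrow> 'a \<Rightarrow> 'a set" where
  "Nset P T y = {z. \<exists>x\<in>desc P y. z \<in> gset P y x \<and> gset P y x \<subseteq> desc T z \<and> \<not> desc P y \<subseteq> desc T z}"

lemma child_unique:
  assumes rt: "rooted_tree V P" and c: "P c = Some y" "P c' = Some y" "x \<in> desc P c" "x \<in> desc P c'"
  shows "c = c'"
proof -
  have one: False if "(pstep P)\<^sup>*\<^sup>* a b" "a \<noteq> b" "P a = Some y" "P b = Some y" for a b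
  proof -
    have "(pstep P)\<^sup>+\<^sup>+ a b" using that(1,2) by (blast dest: rtranclpD)
    then obtain z where "P a = Some z" "(pstep P)\<^sup>*\<^sup>* z b" by (blast dest: tranclpD)
    then have "(pstep P)\<^sup>*\<^sup>* y b" using that(3) by simp
    then have "(pstep P)\<^sup>+\<^sup>+ y y" using that(4) by (rule rtranclp_into_tranclp1)
    then show False using rooted_acyclic[OF rt] by blast
  qed
  have "(pstep P)\<^sup>*\<^sup>* c c' \<or> (pstep P)\<^sup>*\<^sup>* c' c"
    using chain_lemma c(3,4) by (simp add: desc_iff)
  then show ?thesis using one c(1,2) by metis
qed

lemma child_exists:
  assumes "x \<in> desc P y" "x \<noteq> y" shows "\<exists>c. P c = Some y \<and> x \<in> desc P c"
proof -
  have "(pstep P)\<^sup>*\<^sup>* x y" using assms(1) by (simp add: desc_iff)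
  then show ?thesis
  proof (cases rule: rtranclp.cases)
    case rtrancl_refl then show ?thesis using assms(2) by simp
  next
    case (rtrancl_into_rtrancl c)
    then show ?thesis by (auto simp: desc_iff)
  qed
qed

lemma chd_eq:
  assumes rt: "rooted_tree V P" and c: "P c = Some y" "x \<in> desc P c"
  shows "(THE c. P c = Some y \<and> x \<in> desc P c) = c"
proof (rule the_equality)
  show "P c = Some y \<and> x \<in> desc P c" using c by (rule conjI)
  fix c' assume "P c' = Some y \<and> x \<in> desc P c'"
  then show "c' = c" using child_unique[OF rt, of c' y c x] c by blast
qed

lemma chd_prop:
  assumes rt: "rooted_tree V P" and "x \<in> desc P y" "x \<noteq> y"
  shows "P (THE c. P c = Some y \<and> x \<in> desc P c) = Some y \<and> x \<in> desc P (THE c. P c = Some y \<and> x \<in> desc P c)"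
proof -
  obtain c where c: "P c = Some y" "x \<in> desc P c" using child_exists[OF assms(2,3)] by blast
  have "(THE c. P c = Some y \<and> x \<in> desc P c) = c" using rt c by (rule chd_eq)
  then show ?thesis using c by simp
qed

lemma y_notin_child:
  assumes rt: "rooted_tree V P" and "P c = Some y" shows "y \<notin> desc P c"
proof
  assume "y \<in> desc P c"
  then have "(pstep P)\<^sup>*\<^sup>* y c" by (simp add: desc_iff)
  then have "(pstep P)\<^sup>+\<^sup>+ y y" using assms(2) by (rule rtranclp_into_tranclp1)
  then show False using rooted_acyclic[OF rt] by blast
qed

context gst
begin

lemma gs1: "x \<in> desc P y \<Longrightarrow> x \<in> gset P y x"
  using chd_prop[OF rtP] by (simp add: gset_def)

lemma gs2: assumes "x \<in> desc P y" shows "gset P y x \<subseteq> desc P y"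
proof (cases "x = y")
  case True then show ?thesis by (simp add: gset_def desc_iff)
next
  case False
  define c where "c = (THE c. P c = Some y \<and> x \<in> desc P c)"
  have cy: "P c = Some y" using chd_prop[OF rtP assms False] by (simp add: c_def)
  have "desc P c \<subseteq> desc P y"
  proof (rule subsetI)
    fix x' assume "x' \<in> desc P c" then have "(pstep P)\<^sup>*\<^sup>* x' c" by (simp add: desc_iff)
    then have "(pstep P)\<^sup>*\<^sup>* x' y" using cy by (rule rtranclp.rtrancl_into_rtrancl)
    then show "x' \<in> desc P y" by (simp add: desc_iff)
  qed
  then show ?thesis using False by (simp add: gset_def c_def)
qed

lemma gs3:
  assumes "x \<in> desc P y" "z \<in> gset P y x" shows "gset P y z = gset P y x"
proof (cases "x = y")
  case True then show ?thesis using assms by (simp add: gset_def)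
next
  case False
  define c where "c = (THE c. P c = Some y \<and> x \<in> desc P c)"
  have c: "P c = Some y" using chd_prop[OF rtP assms(1) False] by (simp add: c_def)
  have zc: "z \<in> desc P c" using assms(2) False by (simp add: gset_def c_def)
  then have "z \<noteq> y" using y_notin_child[OF rtP c] by blast
  moreover have "(THE c. P c = Some y \<and> z \<in> desc P c) = c" using chd_eq[OF rtP c zc] .
  ultimately show ?thesis using False by (simp add: gset_def c_def)
qed

lemma gs_conn:
  assumes "y \<in> V" "x \<in> desc P y" shows "conn E (gset P y x)"
proof (cases "x = y")
  case True then show ?thesis by (simp add: gset_def conn_def)
next
  case False
  have "P (THE c. P c = Some y \<and> x \<in> desc P c) = Some y" using chd_prop[OF rtP assms(2) False] by simp
  then have "conn E (desc P (THE c. P c = Some y \<and> x \<in> desc P c))" by (rule conn_child[OF assms(1)])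
  then show ?thesis using False by (simp add: gset_def)
qed

lemma gs_V: assumes "y \<in> V" "x \<in> desc P y" shows "gset P y x \<subseteq> V"
proof -
  have "gset P y x \<subseteq> desc P y" using assms(2) by (rule gs2)
  then show ?thesis using desc_subset_V[OF rtP assms(1)] by (rule order_trans)
qed

lemma gs_fin: assumes "y \<in> V" "x \<in> desc P y" shows "finite (gset P y x)"
proof -
  have "gset P y x \<subseteq> V" using assms by (rule gs_V)
  then show ?thesis using finV by (rule finite_subset)
qed

lemma gs5:
  assumes "x \<in> desc P y" "x' \<in> desc P y" "gset P y x = gset P y x'"
  shows "(if x = y then Some (d y) else Some (THE c. P c = Some y \<and> x \<in> desc P c))
       = (if x' = y then Some (d y) else Some (THE c. P c = Some y \<and> x' \<in> desc P c))"
proof -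
  have single: False if "z \<in> desc P y" "z \<noteq> y" "gset P y z = {y}" for z
  proof -
    define c where "c = (THE c. P c = Some y \<and> z \<in> desc P c)"
    have c: "P c = Some y" using chd_prop[OF rtP that(1,2)] by (simp add: c_def)
    have "desc P c = {y}" using that(2,3) by (simp add: gset_def c_def)
    moreover have "c \<in> desc P c" by (simp add: desc_iff)
    ultimately have "c = y" by blast
    then have "(pstep P)\<^sup>+\<^sup>+ y y" using c by (simp add: tranclp.r_into_trancl)
    then show False using acycP by blast
  qed
  show ?thesis
  proof (cases "x = y"; cases "x' = y")
    assume "x \<noteq> y" "x' \<noteq> y"
    define c where "c = (THE c. P c = Some y \<and> x \<in> desc P c)"
    define c' where "c' = (THE c. P c = Some y \<and> x' \<in> desc P c)"
    have c: "P c = Some y" using chd_prop[OF rtP assms(1) \<open>x \<noteq> y\<close>] by (simp add: c_def)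
    have c': "P c' = Some y" using chd_prop[OF rtP assms(2) \<open>x' \<noteq> y\<close>] by (simp add: c'_def)
    have eq: "desc P c = desc P c'" using assms(3) \<open>x \<noteq> y\<close> \<open>x' \<noteq> y\<close> by (simp add: gset_def c_def c'_def)
    have "c \<in> desc P c" by (simp add: desc_iff)
    then have "c \<in> desc P c'" using eq by simp
    moreover have "c \<in> desc P c" by (simp add: desc_iff)
    ultimately have "c = c'" using child_unique[OF rtP c c'] by blast
    then show ?thesis using \<open>x \<noteq> y\<close> \<open>x' \<noteq> y\<close> by (simp add: c_def c'_def)
  next
    assume "x = y" "x' \<noteq> y"
    then show ?thesis using single[OF assms(2)] assms(3) by (simp add: gset_def)
  next
    assume "x \<noteq> y" "x' = y"
    then show ?thesis using single[OF assms(1)] assms(3) by (simp add: gset_def)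
  qed simp
qed

lemma gs6:
  assumes "y' \<in> desc P y" "y' \<noteq> y" "z \<in> desc P y'"
  shows "desc P y' \<subseteq> gset P y z"
proof -
  define c where "c = (THE c. P c = Some y \<and> y' \<in> desc P c)"
  have c: "P c = Some y" "y' \<in> desc P c" using chd_prop[OF rtP assms(1,2)] by (simp_all add: c_def)
  have zc: "z \<in> desc P c" using assms(3) c(2) by (rule desc_trans)
  then have "z \<noteq> y" using y_notin_child[OF rtP c(1)] by blast
  then have "gset P y z = desc P c" using chd_eq[OF rtP c(1) zc] by (simp add: gset_def)
  moreover have "desc P y' \<subseteq> desc P c" using desc_trans[OF _ c(2)] by blast
  ultimately show ?thesis by simp
qed

lemma N_sub: assumes "z \<in> Nset P T y" shows "z \<in> desc P y"
proof -
  obtain x where "x \<in> desc P y" "z \<in> gset P y x" using assms unfolding Nset_def by blast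
  then show ?thesis using gs2 by blast
qed

lemma N_unique1:
  assumes "z \<in> Nset P T y" "z \<in> Nset P T y'" "y' \<in> desc P y" shows "y' = y"
proof (rule ccontr)
  assume ne: "y' \<noteq> y"
  obtain x where x: "x \<in> desc P y" "z \<in> gset P y x" "gset P y x \<subseteq> desc T z"
    using assms(1) unfolding Nset_def by blast
  have nd: "\<not> desc P y' \<subseteq> desc T z" using assms(2) unfolding Nset_def by blast
  have "z \<in> desc P y'" using N_sub assms(2) by blast
  then have "desc P y' \<subseteq> gset P y z" using gs6 assms(3) ne by blast
  also have "\<dots> = gset P y x" using gs3 x by blast
  finally show False using x(3) nd by blast
qed

lemma N_unique:
  assumes "z \<in> Nset P T y" "z \<in> Nset P T y'" shows "y = y'"
proof -
  have "(pstep P)\<^sup>*\<^sup>* y y' \<or> (pstep P)\<^sup>*\<^sup>* y' y"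
    using chain_lemma N_sub[OF assms(1)] N_sub[OF assms(2)] by (simp add: desc_iff)
  then show ?thesis
  proof
    assume "(pstep P)\<^sup>*\<^sup>* y y'"
    then have "y \<in> desc P y'" by (simp add: desc_iff)
    then show ?thesis using N_unique1[OF assms(2,1)] by simp
  next
    assume "(pstep P)\<^sup>*\<^sup>* y' y"
    then have "y' \<in> desc P y" by (simp add: desc_iff)
    then show ?thesis using N_unique1[OF assms(1,2)] by simp
  qed
qed

lemma N_root:
  assumes "tinv V E T" "y \<in> V" shows "root V T \<notin> Nset P T y"
proof -
  have "rooted_tree V T" using assms(1) by (simp add: tinv_def)
  then have "desc T (root V T) = V" by (rule desc_root)
  then have "desc P y \<subseteq> desc T (root V T)" using desc_subset_V[OF rtP assms(2)] by simp
  then show ?thesis unfolding Nset_def by blast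
qed

end




fun trs :: "('a \<Rightarrow> 'a option) \<Rightarrow> (('a \<Rightarrow> 'a option) \<times> 'a) list list \<Rightarrow> ('a \<Rightarrow> 'a option) list" where
  "trs T [] = [T]"
| "trs T (cs # css) = T # trs (fst (last cs)) css"

lemma exec_props:
  "gst_exec V E T X css \<Longrightarrow> length css = length X \<and> trs T css ! 0 = T \<and>
     (\<forall>k<length X. search_run V E (trs T css ! k) (X ! k) (css ! k)
        \<and> trs T css ! Suc k = fst (last (css ! k)))"
proof (induction X arbitrary: T css)
  case Nil then show ?case by (cases css) auto
next
  case (Cons x xs)
  obtain cs css' where css: "css = cs # css'" using Cons.prems by (cases css) auto
  have r: "search_run V E T x cs" "gst_exec V E (fst (last cs)) xs css'"
    using Cons.prems css by auto
  note IH = Cons.IH[OF r(2)]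
  have "\<forall>k<length (x # xs). search_run V E (trs T css ! k) ((x # xs) ! k) (css ! k)
        \<and> trs T css ! Suc k = fst (last (css ! k))"
  proof (intro allI impI)
    fix k assume k: "k < length (x # xs)"
    show "search_run V E (trs T css ! k) ((x # xs) ! k) (css ! k) \<and> trs T css ! Suc k = fst (last (css ! k))"
    proof (cases k)
      case 0 then show ?thesis using r IH css by simp
    next
      case (Suc k') then show ?thesis using IH css k by simp
    qed
  qed
  then show ?case using IH css by simp
qed

lemma valid_tinv:
  assumes tree: "is_tree V E" and v: "valid_st V E T" shows "tinv V E T"
proof -
  interpret gst V E T using tree v by unfold_locales
  show ?thesis by (rule tinvP)
qed

locale exec = gst +
  fixes T0 X css
  assumes v0: "valid_st V E T0" and ex: "gst_exec V E T0 X css"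
begin

definition "tr k = trs T0 css ! k"
definition "touched k z \<longleftrightarrow> z \<in> snd ` set (css ! k)"
definition "charged y k \<longleftrightarrow> (\<exists>z\<in>Nset P (tr k) y. touched k z)"
definition "owner k y x \<longleftrightarrow> (\<exists>z\<in>gset P y x. desc P y \<subseteq> desc (tr k) z)"

lemma len: "length css = length X" using exec_props[OF ex] by simp
lemma tr0: "tr 0 = T0" using exec_props[OF ex] by (simp add: tr_def)
lemma run: "k < length X \<Longrightarrow> search_run V E (tr k) (X ! k) (css ! k)"
  using exec_props[OF ex] by (simp add: tr_def)
lemma tr_suc: "k < length X \<Longrightarrow> tr (Suc k) = fst (last (css ! k))"
  using exec_props[OF ex] by (simp add: tr_def)

lemma inv_tr: "k \<le> length X \<Longrightarrow> tinv V E (tr k)"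
proof (induction k)
  case 0 then show ?case using tr0 valid_tinv[OF tree v0] by simp
next
  case (Suc k)
  then have "k < length X" by simp
  then show ?case using run_tinv[OF sym Suc.IH run] tr_suc by simp
qed

lemma untouched_k:
  assumes "k < length X" "\<not> touched k z"
  shows "desc (tr (Suc k)) z = desc (tr k) z" "X ! k \<notin> desc (tr k) z"
proof -
  have inv: "tinv V E (tr k)" using assms(1) inv_tr by simp
  have nt: "z \<notin> snd ` set (css ! k)" using assms(2) by (simp add: touched_def)
  show "desc (tr (Suc k)) z = desc (tr k) z"
    using untouched(1)[OF sym inv run[OF assms(1)] nt] tr_suc[OF assms(1)] by simp
  show "X ! k \<notin> desc (tr k) z"
    using untouched(2)[OF sym inv run[OF assms(1)] nt] .
qed

lemma rooted_tr: "k \<le> length X \<Longrightarrow> rooted_tree V (tr k)"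
  using inv_tr by (simp add: tinv_def)

lemma top_gs:
  assumes "k \<le> length X" "y \<in> V" "x \<in> desc P y"
  shows "\<exists>z\<in>gset P y x. gset P y x \<subseteq> desc (tr k) z"
proof (rule top_exists)
  show "tinv V E (tr k)" using inv_tr assms(1) by simp
  show "finite (gset P y x)" using gs_fin assms(2,3) by blast
  show "gset P y x \<subseteq> V" using gs_V assms(2,3) by blast
  show "gset P y x \<noteq> {}" using gs1 assms(3) by blast
  show "conn E (gset P y x)" using gs_conn assms(2,3) by blast
qed

lemma top_S:
  assumes "k \<le> length X" "y \<in> V"
  shows "\<exists>w\<in>desc P y. desc P y \<subseteq> desc (tr k) w"
proof (rule top_exists)
  show "tinv V E (tr k)" using inv_tr assms(1) by simp
  have "desc P y \<subseteq> V" using desc_subset_V[OF rtP assms(2)] .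
  then show "finite (desc P y)" "desc P y \<subseteq> V" using finV finite_subset by blast+
  show "desc P y \<noteq> {}" by (auto simp: desc_iff)
  show "conn E (desc P y)" using conn_desc assms(2) by blast
qed

lemma O1:
  assumes k: "k < length X" and y: "y \<in> V" and xk: "X ! k \<in> desc P y" and nc: "\<not> charged y k"
  shows "owner k y (X ! k)"
proof -
  obtain z where z: "z \<in> gset P y (X ! k)" "gset P y (X ! k) \<subseteq> desc (tr k) z"
    using top_gs[of k y "X ! k"] k y xk by auto
  show ?thesis
  proof (cases "desc P y \<subseteq> desc (tr k) z")
    case True then show ?thesis using z(1) by (auto simp: owner_def)
  next
    case False
    then have "z \<in> Nset P (tr k) y" using z xk unfolding Nset_def by blast
    then have "\<not> touched k z" using nc by (auto simp: charged_def)
    then have "X ! k \<notin> desc (tr k) z" using untouched_k(2) k by blast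
    moreover have "X ! k \<in> desc (tr k) z" using z gs1[OF xk] by blast
    ultimately show ?thesis by blast
  qed
qed

lemma O2:
  assumes k: "k < length X" and y: "y \<in> V" and x: "x \<in> desc P y" and nc: "\<not> charged y k"
    and ow: "owner k y x"
  shows "owner (Suc k) y x"
proof -
  obtain z where z: "z \<in> gset P y x" "desc P y \<subseteq> desc (tr k) z" using ow by (auto simp: owner_def)
  obtain w where w: "w \<in> desc P y" "desc P y \<subseteq> desc (tr (Suc k)) w"
    using top_S[of "Suc k" y] k y by auto
  show ?thesis
  proof (cases "gset P y w = gset P y x")
    case True
    then have "w \<in> gset P y x" using gs1[OF w(1)] by simp
    then show ?thesis using w(2) by (auto simp: owner_def)
  next
    case False
    obtain zh where zh: "zh \<in> gset P y w" "gset P y w \<subseteq> desc (tr k) zh"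
      using top_gs[of k y w] k y w(1) by auto
    have nsub: "\<not> desc P y \<subseteq> desc (tr k) zh"
    proof
      assume sub: "desc P y \<subseteq> desc (tr k) zh"
      have zS: "z \<in> desc P y" using gs2[OF x] z(1) by blast
      have zhS: "zh \<in> desc P y" using gs2[OF w(1)] zh(1) by blast
      have "z \<in> desc (tr k) zh" using sub zS by blast
      then have a1: "(pstep (tr k))\<^sup>*\<^sup>* z zh" by (simp add: desc_iff)
      have "zh \<in> desc (tr k) z" using z(2) zhS by blast
      then have a2: "(pstep (tr k))\<^sup>*\<^sup>* zh z" by (simp add: desc_iff)
      have rk: "rooted_tree V (tr k)" using rooted_tr k by simp
      have "z = zh" using rooted_antisym[OF rk a1 a2] .
      then have "gset P y x = gset P y w"
        using gs3[OF x z(1)] gs3[OF w(1) zh(1)] by simp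
      then show False using False by simp
    qed
    then have "zh \<in> Nset P (tr k) y" using zh w(1) unfolding Nset_def by blast
    then have "\<not> touched k zh" using nc by (auto simp: charged_def)
    then have eq: "desc (tr (Suc k)) zh = desc (tr k) zh" using untouched_k(1) k by blast
    have "w \<in> desc (tr k) zh" using zh(2) gs1[OF w(1)] by blast
    then have "w \<in> desc (tr (Suc k)) zh" using eq by simp
    then have "desc P y \<subseteq> desc (tr (Suc k)) zh" using w(2) desc_trans[of _ "tr (Suc k)" w zh] by blast
    then have "desc P y \<subseteq> desc (tr k) zh" using eq by simp
    with nsub show ?thesis by blast
  qed
qed

lemma interval:
  assumes y: "y \<in> V" and jk: "j \<le> k" "k < length X" and xj: "X ! j \<in> desc P y"
    and xk: "X ! k \<in> desc P y" and ne: "gset P y (X ! j) \<noteq> gset P y (X ! k)"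
  shows "\<exists>s. j \<le> s \<and> s \<le> k \<and> charged y s"
proof (rule ccontr)
  assume "\<not> ?thesis"
  then have nc: "\<And>s. j \<le> s \<Longrightarrow> s \<le> k \<Longrightarrow> \<not> charged y s" by blast
  have oj: "owner j y (X ! j)" using O1[OF _ y xj nc] jk by simp
  have "\<forall>i. j + i \<le> k \<longrightarrow> owner (j + i) y (X ! j)"
  proof (intro allI)
    fix i show "j + i \<le> k \<longrightarrow> owner (j + i) y (X ! j)"
    proof (induction i)
      case 0 then show ?case using oj by simp
    next
      case (Suc i)
      show ?case
      proof
        assume "j + Suc i \<le> k"
        then have "owner (j + i) y (X ! j)" using Suc.IH by simp
        moreover have "j + i < length X" using \<open>j + Suc i \<le> k\<close> jk by simp
        moreover have "\<not> charged y (j + i)" using nc \<open>j + Suc i \<le> k\<close> by simp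
        ultimately show "owner (j + Suc i) y (X ! j)" using O2 y xj by simp
      qed
    qed
  qed
  then have "j + (k - j) \<le> k \<longrightarrow> owner (j + (k - j)) y (X ! j)" by (rule spec)
  then have "owner k y (X ! j)" using jk by simp
  moreover have "owner k y (X ! k)" using O1[OF jk(2) y xk nc] jk by simp
  ultimately obtain z1 z2 where z: "z1 \<in> gset P y (X ! j)" "desc P y \<subseteq> desc (tr k) z1"
      "z2 \<in> gset P y (X ! k)" "desc P y \<subseteq> desc (tr k) z2"
    by (auto simp: owner_def)
  have "z1 \<in> desc P y" using z(1) gs2[OF xj] by blast
  have "z2 \<in> desc P y" using z(3) gs2[OF xk] by blast
  have "z1 \<in> desc (tr k) z2" "z2 \<in> desc (tr k) z1" using z \<open>z1 \<in> desc P y\<close> \<open>z2 \<in> desc P y\<close> by blast+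
  then have a: "(pstep (tr k))\<^sup>*\<^sup>* z1 z2" "(pstep (tr k))\<^sup>*\<^sup>* z2 z1" by (simp_all add: desc_iff)
  have rk: "rooted_tree V (tr k)" using rooted_tr jk by simp
  have "z1 = z2" using rooted_antisym[OF rk a] .
  then show False using gs3[OF xj z(1)] gs3[OF xk z(3)] ne by simp
qed

end




context exec
begin

definition "SS y t = {j. j < t \<and> X ! j \<in> desc P y}"
definition "Fy d y x = (if x = y then Some (d y) else Some (THE c. P c = Some y \<and> x \<in> desc P c))"
definition "Aset d y = {t. 2 \<le> t \<and> t \<le> length X \<and> pref_child P d X y (t - 1) \<noteq> None
      \<and> pref_child P d X y t \<noteq> pref_child P d X y (t - 1)}"

lemma pref_eq: "pref_child P d X y t =
   (if SS y t = {} \<or> \<not> (\<exists>c. P c = Some y) then None else Fy d y (X ! Max (SS y t)))"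
  unfolding pref_child_def SS_def Fy_def Let_def by (rule refl)

lemma SS_fin: "finite (SS y t)"
proof -
  have "SS y t \<subseteq> {..<t}" by (auto simp: SS_def)
  then show ?thesis using finite_subset by blast
qed

lemma SS_Suc: "SS y (Suc k) = (if X ! k \<in> desc P y then insert k (SS y k) else SS y k)"
proof -
  have "SS y (Suc k) = SS y k \<union> {j. j = k \<and> X ! j \<in> desc P y}"
    unfolding SS_def by (simp add: less_Suc_eq Collect_disj_eq conj_disj_distribR)
  then show ?thesis by auto
qed

lemma A_facts:
  assumes y: "y \<in> V" and t: "t \<in> Aset d y"
  shows "t = Suc (t - 1)" "t - 1 < length X" "X ! (t - 1) \<in> desc P y" "SS y (t - 1) \<noteq> {}"
    "Max (SS y (t - 1)) < t - 1" "X ! Max (SS y (t - 1)) \<in> desc P y"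
    "gset P y (X ! Max (SS y (t - 1))) \<noteq> gset P y (X ! (t - 1))"
proof -
  define k where "k = t - 1"
  have t2: "2 \<le> t" "t \<le> length X" and pn: "pref_child P d X y k \<noteq> None"
    and pc: "pref_child P d X y t \<noteq> pref_child P d X y k"
    using t by (auto simp: Aset_def k_def)
  have tk: "t = Suc k" using t2 by (simp add: k_def)
  then show "t = Suc (t - 1)" by (simp add: k_def)
  show "t - 1 < length X" using t2 by simp
  have ne: "SS y k \<noteq> {}" and hc: "\<exists>c. P c = Some y" using pn by (auto simp: pref_eq split: if_splits)
  then show "SS y (t - 1) \<noteq> {}" by (simp add: k_def)
  have xk: "X ! k \<in> desc P y"
  proof (rule ccontr)
    assume "X ! k \<notin> desc P y"
    then have "SS y t = SS y k" using tk SS_Suc by simp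
    then have "pref_child P d X y t = pref_child P d X y k" by (simp add: pref_eq)
    with pc show False by simp
  qed
  then show "X ! (t - 1) \<in> desc P y" by (simp add: k_def)
  have mx: "Max (SS y k) \<in> SS y k" using ne SS_fin by simp
  then have mk: "Max (SS y k) < k" "X ! Max (SS y k) \<in> desc P y" by (auto simp: SS_def)
  then show "Max (SS y (t - 1)) < t - 1" "X ! Max (SS y (t - 1)) \<in> desc P y" by (simp_all add: k_def)
  have St: "SS y t = insert k (SS y k)" using tk SS_Suc xk by simp
  have "Max (SS y t) = max k (Max (SS y k))" unfolding St using SS_fin ne by (simp add: Max_insert)
  also have "\<dots> = k" using mk(1) by simp
  finally have "Max (SS y t) = k" .
  then have "pref_child P d X y t = Fy d y (X ! k)" using St hc by (simp add: pref_eq)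
  moreover have "pref_child P d X y k = Fy d y (X ! Max (SS y k))" using ne hc by (simp add: pref_eq)
  ultimately have fne: "Fy d y (X ! Max (SS y k)) \<noteq> Fy d y (X ! k)" using pc by simp
  show "gset P y (X ! Max (SS y (t - 1))) \<noteq> gset P y (X ! (t - 1))"
  proof
    assume "gset P y (X ! Max (SS y (t - 1))) = gset P y (X ! (t - 1))"
    then have "gset P y (X ! Max (SS y k)) = gset P y (X ! k)" by (simp add: k_def)
    from gs5[OF mk(2) xk this] have "Fy d y (X ! Max (SS y k)) = Fy d y (X ! k)"
      unfolding Fy_def .
    with fne show False by simp
  qed
qed

lemma count_y:
  assumes y: "y \<in> V"
  shows "card (Aset d y) \<le> 2 * card {s. s < length X \<and> charged y s}"
proof -
  define A where "A = Aset d y"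
  define C where "C = {s. s < length X \<and> charged y s}"
  define jt where "jt t = Max (SS y (t - 1))" for t
  define f where "f t = (SOME s. jt t \<le> s \<and> s \<le> t - 1 \<and> charged y s)" for t
  have fp: "jt t \<le> f t \<and> f t \<le> t - 1 \<and> charged y (f t)" if "t \<in> A" for t
  proof -
    note F = A_facts[OF y that[unfolded A_def]]
    have "\<exists>s. jt t \<le> s \<and> s \<le> t - 1 \<and> charged y s"
      unfolding jt_def using interval[OF y _ F(2) F(6) F(3) F(7)] F(5) by simp
    then show ?thesis unfolding f_def by (rule someI_ex)
  qed
  define g where "g t = 2 * f t + (if f t = t - 1 then 1 else 0)" for t
  have key: False if t12: "t1 \<in> A" "t2 \<in> A" "t1 < t2" "f t1 = f t2"
      "(f t1 = t1 - 1) = (f t2 = t2 - 1)" for t1 t2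
  proof -
    note F1 = A_facts[OF y t12(1)[unfolded A_def]]
    note F2 = A_facts[OF y t12(2)[unfolded A_def]]
    have "t1 - 1 < t2 - 1" using t12(3) F1(1) F2(1) by simp
    then have "t1 - 1 \<in> SS y (t2 - 1)" using F1(3) by (simp add: SS_def)
    then have "t1 - 1 \<le> jt t2" unfolding jt_def by (rule Max_ge[OF SS_fin])
    moreover have "f t1 \<le> t1 - 1" using fp[OF t12(1)] by simp
    moreover have "jt t2 \<le> f t2" using fp[OF t12(2)] by simp
    ultimately have "f t1 = t1 - 1" using t12(4) by simp
    then have "f t2 = t2 - 1" using t12(5) by simp
    then show False using \<open>f t1 = t1 - 1\<close> t12(4) \<open>t1 - 1 < t2 - 1\<close> by simp
  qed
  have inj: "inj_on g A"
  proof (rule inj_onI)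
    fix t1 t2 assume t: "t1 \<in> A" "t2 \<in> A" "g t1 = g t2"
    have gd: "g t div 2 = f t" "g t mod 2 = (if f t = t - 1 then 1 else 0)" for t
      unfolding g_def by simp_all
    have fe: "f t1 = f t2" using t(3) gd(1)[of t1] gd(1)[of t2] by simp
    have "g t1 mod 2 = g t2 mod 2" using t(3) by simp
    then have te: "(f t1 = t1 - 1) = (f t2 = t2 - 1)" using gd(2)[of t1] gd(2)[of t2]
      by (cases "f t1 = t1 - 1"; cases "f t2 = t2 - 1") simp_all
    show "t1 = t2"
    proof (rule linorder_cases[of t1 t2])
      assume "t1 < t2" then show ?thesis using key[OF t(1,2) _ fe te] by blast
    next
      assume "t2 < t1" then show ?thesis using key[OF t(2,1) _ fe[symmetric] te[symmetric]] by blast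
    qed
  qed
  have sub: "g ` A \<subseteq> (\<lambda>s. 2 * s) ` C \<union> (\<lambda>s. 2 * s + 1) ` C"
  proof
    fix u assume "u \<in> g ` A"
    then obtain t where t: "t \<in> A" "u = g t" by blast
    have "f t \<in> C" using fp[OF t(1)] A_facts(2)[OF y t(1)[unfolded A_def]] by (simp add: C_def)
    show "u \<in> (\<lambda>s. 2 * s) ` C \<union> (\<lambda>s. 2 * s + 1) ` C"
    proof (cases "f t = t - 1")
      case True
      then have "u = 2 * f t + 1" using t(2) by (simp add: g_def)
      then show ?thesis using \<open>f t \<in> C\<close> by blast
    next
      case False
      then have "u = 2 * f t" using t(2) by (simp add: g_def)
      then show ?thesis using \<open>f t \<in> C\<close> by blast
    qed
  qed
  have finC: "finite C"
  proof -
    have "C \<subseteq> {..<length X}" by (auto simp: C_def)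
    then show ?thesis using finite_subset by blast
  qed
  have "card A = card (g ` A)" using inj by (simp add: card_image)
  also have "\<dots> \<le> card ((\<lambda>s. 2 * s) ` C \<union> (\<lambda>s. 2 * s + 1) ` C)"
    using sub finC by (intro card_mono finite_UnI finite_imageI)
  also have "\<dots> \<le> card ((\<lambda>s. 2 * s) ` C) + card ((\<lambda>s. 2 * s + 1) ` C)" by (rule card_Un_le)
  also have "\<dots> \<le> card C + card C" using card_image_le[OF finC] by (intro add_mono)
  finally show ?thesis by (simp add: A_def C_def)
qed

lemma count_k:
  assumes k: "k < length X"
  shows "card {y \<in> V. charged y k} \<le> length (css ! k) - 1"
proof -
  define Y where "Y = {y \<in> V. charged y k}"
  define h where "h y = (SOME z. z \<in> Nset P (tr k) y \<and> touched k z)" for y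
  have hp: "h y \<in> Nset P (tr k) y \<and> touched k (h y)" if "y \<in> Y" for y
  proof -
    have "\<exists>z. z \<in> Nset P (tr k) y \<and> touched k z" using that by (auto simp: Y_def charged_def)
    then show ?thesis unfolding h_def by (rule someI_ex)
  qed
  have inj: "inj_on h Y"
  proof (rule inj_onI)
    fix y1 y2 assume a: "y1 \<in> Y" "y2 \<in> Y" "h y1 = h y2"
    have "h y1 \<in> Nset P (tr k) y1" using hp[OF a(1)] by blast
    moreover have "h y1 \<in> Nset P (tr k) y2" using hp[OF a(2)] a(3) by simp
    ultimately show "y1 = y2" by (rule N_unique)
  qed
  have run_k: "search_run V E (tr k) (X ! k) (css ! k)" using run k .
  have ne: "css ! k \<noteq> []" and hd: "hd (css ! k) = (tr k, root V (tr k))"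
    using run_k by (auto simp: search_run_def)
  have rin: "root V (tr k) \<in> snd ` set (css ! k)"
  proof -
    have "hd (css ! k) \<in> set (css ! k)" using ne by (rule hd_in_set)
    then have "snd (hd (css ! k)) \<in> snd ` set (css ! k)" by (rule imageI)
    then show ?thesis using hd by simp
  qed
  have inv: "tinv V E (tr k)" using inv_tr k by simp
  have sub: "h ` Y \<subseteq> snd ` set (css ! k) - {root V (tr k)}"
  proof
    fix u assume "u \<in> h ` Y"
    then obtain y where y: "y \<in> Y" "u = h y" by blast
    have "y \<in> V" using y(1) by (simp add: Y_def)
    then have "root V (tr k) \<notin> Nset P (tr k) y" using N_root[OF inv] by blast
    then show "u \<in> snd ` set (css ! k) - {root V (tr k)}"
      using hp[OF y(1)] y(2) by (auto simp: touched_def)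
  qed
  have "card Y = card (h ` Y)" using inj by (simp add: card_image)
  also have "\<dots> \<le> card (snd ` set (css ! k) - {root V (tr k)})"
    using sub by (intro card_mono) simp_all
  also have "\<dots> = card (snd ` set (css ! k)) - 1" using rin by (simp add: card_Diff_singleton)
  also have "\<dots> \<le> card (set (css ! k)) - 1" using card_image_le[of "set (css ! k)" snd] by simp
  also have "\<dots> \<le> length (css ! k) - 1" using card_length[of "css ! k"] by simp
  finally show ?thesis by (simp add: Y_def)
qed

lemma card_ind2: assumes "finite A" shows "card {y \<in> A. Q y} = (\<Sum>y\<in>A. if Q y then 1 else 0)"
proof -
  have "card {y \<in> A. Q y} = (\<Sum>y\<in>{y \<in> A. Q y}. 1)" by (rule card_eq_sum)
  also have "\<dots> = (\<Sum>y\<in>A. if Q y then 1 else 0)" by (rule sum.inter_filter[OF assms])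
  finally show ?thesis .
qed

lemma card_ind: "card {s. s < (n::nat) \<and> Q s} = (\<Sum>s<n. if Q s then 1 else 0)"
proof -
  have eq: "{s. s < n \<and> Q s} = {s \<in> {..<n}. Q s}" by auto
  have "card {s \<in> {..<n}. Q s} = (\<Sum>s<n. if Q s then 1 else 0)" by (rule card_ind2[OF finite_lessThan])
  then show ?thesis unfolding eq .
qed

lemma total: "interleave V P d X \<le> 2 * exec_cost css"
proof -
  have "interleave V P d X = (\<Sum>y\<in>V. card (Aset d y))"
    unfolding interleave_def interleave_node_def Aset_def by (rule refl)
  also have "\<dots> \<le> (\<Sum>y\<in>V. 2 * card {s. s < length X \<and> charged y s})"
    by (rule sum_mono) (rule count_y)
  also have "\<dots> = 2 * (\<Sum>y\<in>V. card {s. s < length X \<and> charged y s})"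
    by (rule sum_distrib_left[symmetric])
  also have "(\<Sum>y\<in>V. card {s. s < length X \<and> charged y s})
      = (\<Sum>y\<in>V. \<Sum>s<length X. if charged y s then 1 else 0)"
    by (rule sum.cong) (simp_all only: card_ind)
  also have "\<dots> = (\<Sum>s<length X. \<Sum>y\<in>V. if charged y s then 1 else 0)"
    by (rule sum.swap)
  also have "\<dots> = (\<Sum>s<length X. card {y \<in> V. charged y s})"
    by (rule sum.cong) (simp_all only: card_ind2[OF finV])
  also have "\<dots> \<le> (\<Sum>s<length X. length (css ! s) - 1)"
    by (rule sum_mono) (rule count_k, simp)
  also have "\<dots> = exec_cost css"
  proof -
    have "exec_cost css = (\<Sum>i = 0..<length css. map (\<lambda>cs. length cs - 1) css ! i)"
      unfolding exec_cost_def by (simp only: sum_list_sum_nth length_map)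
    also have "\<dots> = (\<Sum>i<length X. length (css ! i) - 1)"
      using len by (simp add: atLeast0LessThan)
    finally show ?thesis by simp
  qed
  finally show ?thesis by simp
qed

end




lemma path_run:
  assumes rt: "rooted_tree V T" and x: "(pstep T)\<^sup>*\<^sup>* x (root V T)"
  shows "\<exists>cs. cs \<noteq> [] \<and> hd cs = (T, root V T)
     \<and> (\<forall>i. Suc i < length cs \<longrightarrow> gst_step E (cs ! i) (cs ! Suc i)) \<and> last cs = (T, x)"
  using x
proof (induction rule: converse_rtranclp_induct)
  case base
  show ?case by (rule exI[of _ "[(T, root V T)]"]) simp
next
  case (step y z)
  then obtain cs where cs: "cs \<noteq> []" "hd cs = (T, root V T)"
    "\<forall>i. Suc i < length cs \<longrightarrow> gst_step E (cs ! i) (cs ! Suc i)" "last cs = (T, z)" by blast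
  define cs' where "cs' = cs @ [(T, y)]"
  have "cs' \<noteq> []" by (simp add: cs'_def)
  moreover have "hd cs' = (T, root V T)" using cs by (simp add: cs'_def)
  moreover have "last cs' = (T, y)" by (simp add: cs'_def)
  moreover have "\<forall>i. Suc i < length cs' \<longrightarrow> gst_step E (cs' ! i) (cs' ! Suc i)"
  proof (intro allI impI)
    fix i assume i: "Suc i < length cs'"
    show "gst_step E (cs' ! i) (cs' ! Suc i)"
    proof (cases "Suc i < length cs")
      case True
      then show ?thesis using cs(3) by (simp add: cs'_def nth_append)
    next
      case False
      then have si: "Suc i = length cs" using i by (simp add: cs'_def)
      then have "i = length cs - 1" by simp
      then have "cs' ! i = last cs" using cs(1) by (simp add: cs'_def nth_append last_conv_nth)
      moreover have "cs' ! Suc i = (T, y)" using si by (simp add: cs'_def nth_append)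
      ultimately show ?thesis using cs(4) step.hyps(1) by (simp add: gst_step_def)
    qed
  qed
  ultimately show ?case by blast
qed

lemma exists_exec:
  assumes rt: "rooted_tree V T" and XV: "set X \<subseteq> V"
  shows "\<exists>css. gst_exec V E T X css"
  using XV
proof (induction X)
  case Nil
  show ?case by (rule exI[of _ "[]"]) simp
next
  case (Cons x xs)
  then obtain css where css: "gst_exec V E T xs css" by auto
  have "x \<in> V" using Cons.prems by simp
  then have "(pstep T)\<^sup>*\<^sup>* x (root V T)" using rooted_root(3)[OF rt] by blast
  then obtain cs where cs: "cs \<noteq> []" "hd cs = (T, root V T)"
    "\<forall>i. Suc i < length cs \<longrightarrow> gst_step E (cs ! i) (cs ! Suc i)" "last cs = (T, x)"
    using path_run[OF rt] by blast
  have "x \<in> snd ` set cs" using cs(1,4) by (metis last_in_set image_eqI snd_conv)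
  then have "search_run V E T x cs" using cs by (simp add: search_run_def)
  then have "gst_exec V E T (x # xs) (cs # css)" using css cs(4) by simp
  then show ?case by blast
qed

theorem theorem1:
  fixes V :: "'a set" and E :: "'a \<Rightarrow> 'a \<Rightarrow> bool"
    and P :: "'a \<Rightarrow> 'a option" and d :: "'a \<Rightarrow> 'a" and X :: "'a list"
  assumes "is_tree V E"
    and "valid_st V E P"
    and "\<forall>y\<in>V. (\<exists>c. P c = Some y) \<longrightarrow> P (d y) = Some y"
    and "set X \<subseteq> V"
  shows "real (OPT V E X) \<ge> real (interleave V P d X) / 2 - real (card V)"
proof -
  define S where "S = {exec_cost css | T0 css. valid_st V E T0 \<and> gst_exec V E T0 X css}"
  have rP: "rooted_tree V P" using assms(2) by (simp add: valid_st_def)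
  obtain css0 where "gst_exec V E P X css0" using exists_exec[OF rP assms(4)] by blast
  then have "exec_cost css0 \<in> S" using assms(2) unfolding S_def by blast
  then have "S \<noteq> {}" by blast
  then have "Inf S \<in> S" by (rule Inf_nat_def1)
  then obtain T0 css where T0: "valid_st V E T0" "gst_exec V E T0 X css" "OPT V E X = exec_cost css"
    unfolding S_def OPT_def by auto
  interpret ex: exec V E P T0 X css
    using assms(1,2) T0(1,2) by unfold_locales
  have "interleave V P d X \<le> 2 * OPT V E X" using ex.total T0(3) by simp
  then have "real (interleave V P d X) \<le> 2 * real (OPT V E X)" by linarith
  then show ?thesis by simp
qed



end
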